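(* In the multi-unit auction with unit demand (with $m$ units, $n$ bidders, $1\le m\le n-1$, types in $[L,U]$), if a feasible anonymous linear Groves mechanism is undominated, then it is an OEL mechanism.
   Context: Multi-unit auction with unit demand: $m$ identical units, $n\ge 2$ bidders, $1\le m\le n-1$, each bidder wants at most one unit; bidder $i$'s type $\theta_i\in[L,U]$ ($L<U$) is her value for one unit. Efficient decisions allocate units to $m$ highest bidders. Groves mechanisms: $t_i(\theta)=\sum_{j\ne i}v_j(f(\theta),\theta_j)+h_i(\theta_{-i})$; player $i$'s utility is value plus $t_i$. The VCG (Clarke) mechanism uses $h_i(\theta_{-i})=-\max_d\sum_{j\ne i}v_j(d,\theta_j)$; here $\sum_i t_i^{VCG}(\theta)=-m[\theta]_{m+1}$, where $[x]_j$ denotes the $j$th highest entry of a vector $x$. An anonymous linear Groves mechanism has $t_i(\theta)=t_i^{VCG}(\theta)+a_0+\sum_{j=1}^{n-1}a_j[\theta_{-i}]_j$ for constants $a_0,\dots,a_{n-1}$. Feasible: $\sum_i t_i(\theta)\le 0$ for all $\theta$. A feasible Groves mechanism $t$ is undominated if no other feasible Groves mechanism $t'$ dominates it, i.e. there is no $t'$ with $t_i(\theta)\le t'_i(\theta)$ for all $\theta,i$ and strict inequality for some $\theta,i$. OEL mechanisms: $t_i(\theta)=t_i^{VCG}(\theta)+c_0+\sum_{j=1}^{n-1}c_j[\theta_{-i}]_j$, where for an index $k\in\{0,\dots,n\}$ with $k-m$ odd the constants are: writing $\alpha_i=(-1)^{m-i}\binom{n-i-1}{n-m-1}/\binom{m-1}{i-1}$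 and $\beta_i=(-1)^{m-i-1}\binom{i-1}{m-1}/\binom{n-m-1}{n-i-1}$, • $k=0$: $c_i=\alpha_i$ for $i=1,\dots,m$; $c_0=Um/n-U\sum_{i=1}^m\alpha_i$; other $c_i=0$. • $1\le k\le m$: $c_i=\alpha_i$ for $i=k+1,\dots,m$; $c_k=m/n-\sum_{i=k+1}^m\alpha_i$; other $c_i=0$ (including $c_0$). • $m+1\le k\le n-1$: $c_i=\beta_i$ for $i=m+1,\dots,k-1$; $c_k=m/n-\sum_{i=m+1}^{k-1}\beta_i$; other $c_i=0$. • $k=n$: $c_i=\beta_i$ for $i=m+1,\dots,n-1$; $c_0=Lm/n-L\sum_{i=m+1}^{n-1}\beta_i$; other $c_i=0$. *)

theory Defs
  imports Complex_Main
begin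

text \<open>Bidders are 0,...,n-1; a type profile is theta :: nat => real, only the
entries below n matter.  Transfer mechanisms are t :: nat => (nat => real) => real,
t i theta being the transfer to bidder i.\<close>

definition type_profiles :: "nat \<Rightarrow> real \<Rightarrow> real \<Rightarrow> (nat \<Rightarrow> real) set" where
  "type_profiles n L U = {\<theta>. \<forall>i<n. \<theta> i \<in> {L..U}}"

definition decisions :: "nat \<Rightarrow> nat \<Rightarrow> nat set set" where
  "decisions n m = {S. S \<subseteq> {..<n} \<and> card S = m}"

definition valuation :: "nat set \<Rightarrow> nat \<Rightarrow> real \<Rightarrow> real" where
  "valuation S j x = (if j \<in> S then x else 0)"

definition efficient :: "nat \<Rightarrow> nat \<Rightarrow> real \<Rightarrow> real \<Rightarrow> ((nat \<Rightarrow> real) \<Rightarrow> nat set) \<Rightarrow> bool" where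
  "efficient n m L U f \<longleftrightarrow> (\<forall>\<theta>\<in>type_profiles n L U. f \<theta> \<in> decisions n m \<and>
     (\<forall>S\<in>decisions n m. (\<Sum>j<n. valuation S j (\<theta> j)) \<le> (\<Sum>j<n. valuation (f \<theta>) j (\<theta> j))))"

text \<open>[x]_j : j-th highest entry (j >= 1) of a vector given as a list\<close>
definition kth_highest :: "nat \<Rightarrow> real list \<Rightarrow> real" where
  "kth_highest j xs = rev (sort xs) ! (j - 1)"

definition others :: "nat \<Rightarrow> nat \<Rightarrow> (nat \<Rightarrow> real) \<Rightarrow> real list" where
  "others n i \<theta> = map \<theta> (filter (\<lambda>j. j \<noteq> i) [0..<n])"

definition depends_only_on_others :: "nat \<Rightarrow> nat \<Rightarrow> ((nat \<Rightarrow> real) \<Rightarrow> real) \<Rightarrow> bool" where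
  "depends_only_on_others n i g \<longleftrightarrow>
     (\<forall>\<theta> \<theta>'. (\<forall>j<n. j \<noteq> i \<longrightarrow> \<theta> j = \<theta>' j) \<longrightarrow> g \<theta> = g \<theta>')"

definition groves :: "nat \<Rightarrow> real \<Rightarrow> real \<Rightarrow> ((nat \<Rightarrow> real) \<Rightarrow> nat set)
    \<Rightarrow> (nat \<Rightarrow> (nat \<Rightarrow> real) \<Rightarrow> real) \<Rightarrow> bool" where
  "groves n L U f t \<longleftrightarrow> (\<exists>h. (\<forall>i<n. depends_only_on_others n i (h i)) \<and>
     (\<forall>\<theta>\<in>type_profiles n L U. \<forall>i<n.
        t i \<theta> = (\<Sum>j\<in>{..<n} - {i}. valuation (f \<theta>) j (\<theta> j)) + h i \<theta>))"

text \<open>VCG (Clarke) transfer: h_i(theta_{-i}) = - max_d sum_{j<>i} v_j = - (sum of the m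
highest entries of theta_{-i}).\<close>
definition vcg :: "nat \<Rightarrow> nat \<Rightarrow> ((nat \<Rightarrow> real) \<Rightarrow> nat set) \<Rightarrow> nat \<Rightarrow> (nat \<Rightarrow> real) \<Rightarrow> real" where
  "vcg n m f i \<theta> = (\<Sum>j\<in>{..<n} - {i}. valuation (f \<theta>) j (\<theta> j))
      - (\<Sum>j=1..m. kth_highest j (others n i \<theta>))"

definition linear_mech :: "nat \<Rightarrow> nat \<Rightarrow> ((nat \<Rightarrow> real) \<Rightarrow> nat set) \<Rightarrow> (nat \<Rightarrow> real)
    \<Rightarrow> nat \<Rightarrow> (nat \<Rightarrow> real) \<Rightarrow> real" where
  "linear_mech n m f a i \<theta> = vcg n m f i \<theta> + a 0
      + (\<Sum>j=1..n-1. a j * kth_highest j (others n i \<theta>))"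

definition feasible :: "nat \<Rightarrow> real \<Rightarrow> real \<Rightarrow> (nat \<Rightarrow> (nat \<Rightarrow> real) \<Rightarrow> real) \<Rightarrow> bool" where
  "feasible n L U t \<longleftrightarrow> (\<forall>\<theta>\<in>type_profiles n L U. (\<Sum>i<n. t i \<theta>) \<le> 0)"

definition dominates :: "nat \<Rightarrow> real \<Rightarrow> real \<Rightarrow> (nat \<Rightarrow> (nat \<Rightarrow> real) \<Rightarrow> real)
    \<Rightarrow> (nat \<Rightarrow> (nat \<Rightarrow> real) \<Rightarrow> real) \<Rightarrow> bool" where
  "dominates n L U t' t \<longleftrightarrow>
     (\<forall>\<theta>\<in>type_profiles n L U. \<forall>i<n. t i \<theta> \<le> t' i \<theta>) \<and>
     (\<exists>\<theta>\<in>type_profiles n L U. \<exists>i<n. t i \<theta> < t' i \<theta>)"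

definition undominated :: "nat \<Rightarrow> real \<Rightarrow> real \<Rightarrow> ((nat \<Rightarrow> real) \<Rightarrow> nat set)
    \<Rightarrow> (nat \<Rightarrow> (nat \<Rightarrow> real) \<Rightarrow> real) \<Rightarrow> bool" where
  "undominated n L U f t \<longleftrightarrow> groves n L U f t \<and> feasible n L U t \<and>
     \<not> (\<exists>t'. groves n L U f t' \<and> feasible n L U t' \<and> dominates n L U t' t)"

definition alpha :: "nat \<Rightarrow> nat \<Rightarrow> nat \<Rightarrow> real" where
  "alpha n m i = (-1) ^ (m - i) * real ((n - i - 1) choose (n - m - 1)) / real ((m - 1) choose (i - 1))"

text \<open>beta uses (-1)^(i-m-1), equal to (-1)^(m-i-1) for i >= m+1.\<close>
definition beta :: "nat \<Rightarrow> nat \<Rightarrow> nat \<Rightarrow> real" where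
  "beta n m i = (-1) ^ (i - m - 1) * real ((i - 1) choose (m - 1)) / real ((n - m - 1) choose (n - i - 1))"

definition oel_coeffs :: "nat \<Rightarrow> nat \<Rightarrow> real \<Rightarrow> real \<Rightarrow> nat \<Rightarrow> nat \<Rightarrow> real" where
  "oel_coeffs n m L U k i =
    (if k = 0 then
       (if i = 0 then U * real m / real n - U * (\<Sum>l=1..m. alpha n m l)
        else if 1 \<le> i \<and> i \<le> m then alpha n m i else 0)
     else if k \<le> m then
       (if k + 1 \<le> i \<and> i \<le> m then alpha n m i
        else if i = k then real m / real n - (\<Sum>l=k+1..m. alpha n m l) else 0)
     else if k \<le> n - 1 then
       (if m + 1 \<le> i \<and> i \<le> k - 1 then beta n m i
        else if i = k then real m / real n - (\<Sum>l=m+1..k-1. beta n m l) else 0)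
     else
       (if i = 0 then L * real m / real n - L * (\<Sum>l=m+1..n-1. beta n m l)
        else if m + 1 \<le> i \<and> i \<le> n - 1 then beta n m i else 0))"

definition is_OEL :: "nat \<Rightarrow> nat \<Rightarrow> real \<Rightarrow> real \<Rightarrow> ((nat \<Rightarrow> real) \<Rightarrow> nat set)
    \<Rightarrow> (nat \<Rightarrow> (nat \<Rightarrow> real) \<Rightarrow> real) \<Rightarrow> bool" where
  "is_OEL n m L U f t \<longleftrightarrow> (\<exists>k\<le>n. odd (int k - int m) \<and>
     (\<forall>\<theta>\<in>type_profiles n L U. \<forall>i<n. t i \<theta> = linear_mech n m f (oel_coeffs n m L U k) i \<theta>))"

end

theory Submission
  imports Defs "HOL-Library.Multiset"
begin

definition X :: "nat \<Rightarrow> (nat \<Rightarrow> real) \<Rightarrow> nat \<Rightarrow> real" where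
  "X n \<theta> j = kth_highest j (map \<theta> [0..<n])"

lemma kth_nth: "1 \<le> j \<Longrightarrow> j \<le> length xs \<Longrightarrow> kth_highest j xs = sort xs ! (length xs - j)"
  unfolding kth_highest_def by (simp add: rev_nth)

lemma X_nth: "1 \<le> j \<Longrightarrow> j \<le> n \<Longrightarrow> X n \<theta> j = sort (map \<theta> [0..<n]) ! (n - j)"
  unfolding X_def by (simp add: kth_nth)

lemma filter_neq_upt: "i < n \<Longrightarrow> filter (\<lambda>j. j \<noteq> i) [0..<n] = [0..<i] @ [Suc i..<n]"
proof -
  assume "i < n"
  then have "[0..<n] = [0..<i] @ i # [Suc i..<n]"
    by (metis le0 le_add_diff_inverse less_imp_le upt_add_eq_append upt_conv_Cons)
  then show ?thesis by (simp add: filter_id_conv)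
qed

lemma others_mset: "i < n \<Longrightarrow> mset (map \<theta> [0..<n]) = mset (others n i \<theta>) + {#\<theta> i#}"
proof -
  assume "i < n"
  then have "[0..<n] = [0..<i] @ i # [Suc i..<n]"
    by (metis le0 le_add_diff_inverse less_imp_le upt_add_eq_append upt_conv_Cons)
  then show ?thesis using \<open>i < n\<close> by (simp add: others_def filter_neq_upt)
qed

lemma length_others: "i < n \<Longrightarrow> length (others n i \<theta>) = n - 1"
  using others_mset[of i n \<theta>] by (metis add_diff_cancel_right' length_map length_upt size_mset size_single size_union minus_nat.diff_0)

lemma sort_others: "i < n \<Longrightarrow> sort (others n i \<theta>) = remove1 (\<theta> i) (sort (map \<theta> [0..<n]))"
proof (rule properties_for_sort)
  assume "i < n"
  then have h: "mset (map \<theta> [0..<n]) = mset (others n i \<theta>) + {#\<theta> i#}" by (rule others_mset)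
  show "mset (remove1 (\<theta> i) (sort (map \<theta> [0..<n]))) = mset (others n i \<theta>)"
    using h by (simp only: mset_remove1 mset_sort) simp
  show "sorted (remove1 (\<theta> i) (sort (map \<theta> [0..<n])))" by (simp add: sorted_remove1)
qed

lemma remove1_nth_sorted:
  "sorted xs \<Longrightarrow> p < length xs \<Longrightarrow> q < length xs - 1 \<Longrightarrow>
   remove1 (xs!p) xs ! q = (if q < p then xs!q else xs!Suc q)"
proof (induction xs arbitrary: p q)
  case Nil
  then show ?case by simp
next
  case (Cons y ys)
  show ?case
  proof (cases p)
    case 0
    then show ?thesis by simp
  next
    case (Suc p')
    have sy: "\<And>k. k < length ys \<Longrightarrow> y \<le> ys ! k" using Cons.prems(1) by simp
    have sys: "sorted ys" using Cons.prems(1) by simp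
    have p': "p' < length ys" using Cons.prems(2) Suc by simp
    show ?thesis
    proof (cases "y = ys ! p'")
      case True
      have eq: "ys ! k = y" if "k \<le> p'" for k
      proof -
        have "ys ! k \<le> ys ! p'" using sorted_nth_mono[OF sys that p'] .
        moreover have "y \<le> ys ! k" using sy that p' by simp
        ultimately show ?thesis using True by simp
      qed
      have r: "remove1 ((y # ys) ! p) (y # ys) = ys" using True Suc by simp
      show ?thesis
      proof (cases "q < p")
        case True
        show ?thesis
        proof (cases q)
          case 0
          then show ?thesis using r True eq[of 0] by simp
        next
          case (Suc q')
          then have "ys ! q = y" "ys ! q' = y" using eq True \<open>p = Suc p'\<close> by simp_all
          then show ?thesis using r True Suc by simp
        qed
      next
        case False
        then show ?thesis using r by simp
      qed
    next
      case False
      then have r: "remove1 ((y # ys) ! p) (y # ys) = y # remove1 (ys!p') ys" using Suc by simp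
      show ?thesis
      proof (cases q)
        case 0
        then show ?thesis using r Suc by simp
      next
        case (Suc q')
        have "q' < length ys - 1" using Cons.prems(3) Suc by simp
        then show ?thesis using r Suc \<open>p = Suc p'\<close> Cons.IH[OF sys p'] by simp
      qed
    qed
  qed
qed

lemma sum_perm_sort: "(\<Sum>i<n. g (\<theta> i)) = (\<Sum>p<n. g (sort (map \<theta> [0..<n]) ! p))"
proof -
  have "(\<Sum>i<n. g (\<theta> i)) = sum_list (map g (map \<theta> [0..<n]))"
    by (simp add: sum_list_sum_nth atLeast0LessThan)
  also have "\<dots> = sum_mset (image_mset g (mset (map \<theta> [0..<n])))"
    by (metis mset_map sum_mset_sum_list)
  also have "\<dots> = sum_mset (image_mset g (mset (sort (map \<theta> [0..<n]))))"
    by simp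
  also have "\<dots> = sum_list (map g (sort (map \<theta> [0..<n])))"
    by (metis mset_map sum_mset_sum_list)
  also have "\<dots> = (\<Sum>p<n. g (sort (map \<theta> [0..<n]) ! p))"
    by (simp add: sum_list_sum_nth atLeast0LessThan)
  finally show ?thesis .
qed

lemma sum_if_less: "c < n \<Longrightarrow> (\<Sum>p<n. if c < p then A else B) = real (n - Suc c) * A + real (Suc c) * (B::real)"
proof -
  assume c: "c < n"
  have "(\<Sum>p<n. if c < p then A else B) = (\<Sum>p\<in>{..<n} \<inter> {p. c < p}. A) + (\<Sum>p\<in>{..<n} \<inter> - {p. c < p}. B)"
    by (rule sum.If_cases) simp
  also have "{..<n} \<inter> {p. c < p} = {Suc c..<n}" by auto
  also have "{..<n} \<inter> - {p. c < p} = {..c}" using c by auto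
  finally show ?thesis by simp
qed

lemma sum_kth:
  assumes "1 \<le> j" "j < n"
  shows "(\<Sum>i<n. kth_highest j (others n i \<theta>)) = (real n - real j) * X n \<theta> j + real j * X n \<theta> (Suc j)"
proof -
  define as where "as = sort (map \<theta> [0..<n])"
  have las: "length as = n" and sas: "sorted as" by (simp_all add: as_def)
  define \<phi> where "\<phi> v = remove1 v as ! (n - 1 - j)" for v
  have "kth_highest j (others n i \<theta>) = \<phi> (\<theta> i)" if "i < n" for i
    using that assms by (simp add: kth_nth length_others sort_others \<phi>_def as_def)
  then have "(\<Sum>i<n. kth_highest j (others n i \<theta>)) = (\<Sum>i<n. \<phi> (\<theta> i))" by simp
  also have "\<dots> = (\<Sum>p<n. \<phi> (as ! p))" unfolding as_def by (rule sum_perm_sort)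
  also have "\<dots> = (\<Sum>p<n. if n - 1 - j < p then as ! (n - 1 - j) else as ! (n - j))"
  proof (rule sum.cong[OF refl])
    fix p assume "p \<in> {..<n}"
    then have "p < length as" "n - 1 - j < length as - 1" using las assms by auto
    then show "\<phi> (as ! p) = (if n - 1 - j < p then as ! (n - 1 - j) else as ! (n - j))"
      unfolding \<phi>_def using remove1_nth_sorted[OF sas] assms
      by (metis Suc_diff_Suc diff_Suc_eq_diff_pred le_eq_less_or_eq less_Suc_eq_le zero_less_diff)
  qed
  also have "\<dots> = real j * as ! (n - 1 - j) + (real n - real j) * as ! (n - j)"
    using assms by (subst sum_if_less) (auto simp: Suc_diff_Suc of_nat_diff)
  also have "as ! (n - 1 - j) = X n \<theta> (Suc j)" using assms by (simp add: X_nth as_def)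
  also have "as ! (n - j) = X n \<theta> j" using assms by (simp add: X_nth as_def)
  finally show ?thesis by simp
qed

definition topm :: "nat \<Rightarrow> nat \<Rightarrow> (nat \<Rightarrow> real) \<Rightarrow> real" where
  "topm n m \<theta> = (\<Sum>j=1..m. X n \<theta> j)"

definition Gf :: "nat \<Rightarrow> nat \<Rightarrow> (nat \<Rightarrow> real) \<Rightarrow> (nat \<Rightarrow> real) \<Rightarrow> real" where
  "Gf n m a x = real n * a 0 + (\<Sum>j=1..n-1. a j * ((real n - real j) * x j + real j * x (Suc j))) - real m * x (Suc m)"

lemma telesc: "(\<Sum>j=1..k. (real n - real j) * x j + real j * x (Suc j)) = (real n - 1) * (\<Sum>j=1..k. x j) + real k * x (Suc k)"
  by (induction k) (simp_all add: algebra_simps)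

lemma S_formula:
  assumes "1 \<le> m" "m < n"
  shows "(\<Sum>i<n. linear_mech n m f a i \<theta>) = (real n - 1) * ((\<Sum>j<n. valuation (f \<theta>) j (\<theta> j)) - topm n m \<theta>) + Gf n m a (X n \<theta>)"
proof -
  define W where "W = (\<Sum>j<n. valuation (f \<theta>) j (\<theta> j))"
  have A: "(\<Sum>i<n. \<Sum>j\<in>{..<n} - {i}. valuation (f \<theta>) j (\<theta> j)) = (real n - 1) * W"
  proof -
    have "(\<Sum>i<n. \<Sum>j\<in>{..<n} - {i}. valuation (f \<theta>) j (\<theta> j)) = (\<Sum>i<n. W - valuation (f \<theta>) i (\<theta> i))"
      by (rule sum.cong[OF refl]) (simp add: sum_diff1 W_def)
    also have "\<dots> = real n * W - W" by (simp add: sum_subtractf W_def)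
    finally show ?thesis by (simp add: algebra_simps)
  qed
  have B: "(\<Sum>i<n. \<Sum>j=1..m. kth_highest j (others n i \<theta>)) = (real n - 1) * topm n m \<theta> + real m * X n \<theta> (Suc m)"
  proof -
    have "(\<Sum>i<n. \<Sum>j=1..m. kth_highest j (others n i \<theta>)) = (\<Sum>j=1..m. \<Sum>i<n. kth_highest j (others n i \<theta>))"
      by (rule sum.swap)
    also have "\<dots> = (\<Sum>j=1..m. (real n - real j) * X n \<theta> j + real j * X n \<theta> (Suc j))"
      using assms by (intro sum.cong[OF refl]) (simp add: sum_kth)
    finally show ?thesis using telesc[where k=m and x="X n \<theta>" and n=n] by (simp add: topm_def)
  qed
  have C: "(\<Sum>i<n. \<Sum>j=1..n-1. a j * kth_highest j (others n i \<theta>)) = (\<Sum>j=1..n-1. a j * ((real n - real j) * X n \<theta> j + real j * X n \<theta> (Suc j)))"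
  proof -
    have "(\<Sum>i<n. \<Sum>j=1..n-1. a j * kth_highest j (others n i \<theta>)) = (\<Sum>j=1..n-1. \<Sum>i<n. a j * kth_highest j (others n i \<theta>))"
      by (rule sum.swap)
    also have "\<dots> = (\<Sum>j=1..n-1. a j * ((real n - real j) * X n \<theta> j + real j * X n \<theta> (Suc j)))"
    proof (rule sum.cong[OF refl])
      fix j assume "j \<in> {1..n-1}"
      then have "1 \<le> j" "j < n" by auto
      then show "(\<Sum>i<n. a j * kth_highest j (others n i \<theta>)) = a j * ((real n - real j) * X n \<theta> j + real j * X n \<theta> (Suc j))"
        by (simp add: sum_kth flip: sum_distrib_left)
    qed
    finally show ?thesis .
  qed
  have "(\<Sum>i<n. linear_mech n m f a i \<theta>) = (\<Sum>i<n. \<Sum>j\<in>{..<n} - {i}. valuation (f \<theta>) j (\<theta> j))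
     - (\<Sum>i<n. \<Sum>j=1..m. kth_highest j (others n i \<theta>)) + real n * a 0 + (\<Sum>i<n. \<Sum>j=1..n-1. a j * kth_highest j (others n i \<theta>))"
    by (simp add: linear_mech_def vcg_def sum.distrib sum_subtractf)
  also have "\<dots> = (real n - 1) * (W - topm n m \<theta>) + Gf n m a (X n \<theta>)"
    unfolding A B C Gf_def by (simp add: algebra_simps)
  finally show ?thesis by (simp add: W_def)
qed

lemma valuation_sum: "S \<subseteq> {..<n} \<Longrightarrow> (\<Sum>j<n. valuation S j (\<theta> j)) = (\<Sum>j\<in>S. \<theta> j)"
proof -
  assume S: "S \<subseteq> {..<n}"
  have "(\<Sum>j<n. valuation S j (\<theta> j)) = (\<Sum>j<n. if j \<in> S then \<theta> j else 0)"
    by (simp add: valuation_def)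
  also have "\<dots> = sum \<theta> ({..<n} \<inter> S)" by (simp add: sum.inter_restrict)
  also have "{..<n} \<inter> S = S" using S by auto
  finally show ?thesis .
qed

lemma subset_sum_le_topm:
  assumes S: "S \<subseteq> {..<n}" and cS: "card S = m" and m: "1 \<le> m" "m \<le> n"
  shows "(\<Sum>j\<in>S. \<theta> j) \<le> topm n m \<theta>"
proof -
  define as where "as = sort (map \<theta> [0..<n])"
  have las: "length as = n" and sas: "sorted as" by (simp_all add: as_def)
  define \<tau> where "\<tau> = as ! (n - m)"
  have fS: "finite S" using S finite_subset by blast
  have "(\<Sum>j\<in>S. \<theta> j) \<le> (\<Sum>j\<in>S. \<tau> + max (\<theta> j - \<tau>) 0)"
    by (rule sum_mono) simp
  also have "\<dots> = real m * \<tau> + (\<Sum>j\<in>S. max (\<theta> j - \<tau>) 0)"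
    by (simp add: sum.distrib cS)
  also have "(\<Sum>j\<in>S. max (\<theta> j - \<tau>) 0) \<le> (\<Sum>j<n. max (\<theta> j - \<tau>) 0)"
    by (rule sum_mono2) (use S in auto)
  also have "(\<Sum>j<n. max (\<theta> j - \<tau>) 0) = (\<Sum>p<n. max (as ! p - \<tau>) 0)"
    unfolding as_def by (rule sum_perm_sort)
  also have "\<dots> = (\<Sum>p<n. if n - m \<le> p then as ! p - \<tau> else 0)"
  proof (rule sum.cong[OF refl])
    fix p assume p: "p \<in> {..<n}"
    show "max (as ! p - \<tau>) 0 = (if n - m \<le> p then as ! p - \<tau> else 0)"
    proof (cases "n - m \<le> p")
      case True
      then have "\<tau> \<le> as ! p" unfolding \<tau>_def using sorted_nth_mono[OF sas True] p las by simp
      then show ?thesis using True by simp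
    next
      case False
      then have "as ! p \<le> \<tau>" unfolding \<tau>_def using sorted_nth_mono[OF sas, of p "n - m"] m las by simp
      then show ?thesis using False by simp
    qed
  qed
  also have "\<dots> = (\<Sum>p\<in>{n-m..<n}. as ! p - \<tau>)"
  proof -
    have "(\<Sum>p<n. if n - m \<le> p then as ! p - \<tau> else 0) = (\<Sum>p\<in>{..<n} \<inter> {p. n - m \<le> p}. as ! p - \<tau>)"
      by (simp add: sum.inter_restrict)
    also have "{..<n} \<inter> {p. n - m \<le> p} = {n-m..<n}" by auto
    finally show ?thesis .
  qed
  also have "\<dots> = (\<Sum>p\<in>{n-m..<n}. as ! p) - real m * \<tau>"
    using m by (simp add: sum_subtractf)
  also have "(\<Sum>p\<in>{n-m..<n}. as ! p) = (\<Sum>j=1..m. as ! (n - j))"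
    by (rule sum.reindex_bij_witness[where i="\<lambda>p. n - p" and j="\<lambda>p. n - p"]) (use m in auto)
  also have "\<dots> = topm n m \<theta>"
    unfolding topm_def as_def using m by (intro sum.cong[OF refl]) (simp add: X_nth)
  finally show ?thesis by simp
qed

lemma W_le:
  assumes "efficient n m L U f" "\<theta> \<in> type_profiles n L U" "1 \<le> m" "m \<le> n"
  shows "(\<Sum>j<n. valuation (f \<theta>) j (\<theta> j)) \<le> topm n m \<theta>"
proof -
  have "f \<theta> \<in> decisions n m" using assms(1,2) by (simp add: efficient_def)
  then have S: "f \<theta> \<subseteq> {..<n}" "card (f \<theta>) = m" by (simp_all add: decisions_def)
  then show ?thesis using subset_sum_le_topm[OF S assms(3,4)] valuation_sum[OF S(1)] by simp
qed

lemma sort_dec: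
  assumes "\<And>i j. i \<le> j \<Longrightarrow> j < n \<Longrightarrow> \<theta> j \<le> \<theta> i"
  shows "sort (map \<theta> [0..<n]) = rev (map \<theta> [0..<n])"
proof (rule properties_for_sort)
  show "mset (rev (map \<theta> [0..<n])) = mset (map \<theta> [0..<n])" by simp
  show "sorted (rev (map \<theta> [0..<n]))"
    unfolding sorted_iff_nth_mono
  proof (intro allI impI)
    fix i j assume ij: "i \<le> j" "j < length (rev (map \<theta> [0..<n]))"
    then show "rev (map \<theta> [0..<n]) ! i \<le> rev (map \<theta> [0..<n]) ! j"
      using assms by (simp add: rev_nth)
  qed
qed

lemma X_dec:
  assumes "\<And>i j. i \<le> j \<Longrightarrow> j < n \<Longrightarrow> \<theta> j \<le> \<theta> i" "1 \<le> j" "j \<le> n"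
  shows "X n \<theta> j = \<theta> (j - 1)"
  using assms by (simp add: X_nth sort_dec rev_nth)

lemma W_ge_dec:
  assumes "efficient n m L U f" "\<theta> \<in> type_profiles n L U" "1 \<le> m" "m \<le> n"
    and dec: "\<And>i j. i \<le> j \<Longrightarrow> j < n \<Longrightarrow> \<theta> j \<le> \<theta> i"
  shows "topm n m \<theta> \<le> (\<Sum>j<n. valuation (f \<theta>) j (\<theta> j))"
proof -
  have d: "{..<m} \<in> decisions n m" using assms by (auto simp: decisions_def)
  have "(\<Sum>j<n. valuation {..<m} j (\<theta> j)) \<le> (\<Sum>j<n. valuation (f \<theta>) j (\<theta> j))"
    using assms(1,2) d by (simp add: efficient_def)
  moreover have "(\<Sum>j<n. valuation {..<m} j (\<theta> j)) = (\<Sum>j<m. \<theta> j)"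
    using assms by (subst valuation_sum) auto
  moreover have "topm n m \<theta> = (\<Sum>j<m. \<theta> j)"
  proof -
    have "topm n m \<theta> = (\<Sum>j=1..m. \<theta> (j - 1))"
      unfolding topm_def using assms by (intro sum.cong[OF refl]) (simp add: X_dec)
    also have "\<dots> = (\<Sum>j<m. \<theta> j)"
      by (rule sum.reindex_bij_witness[where i="\<lambda>j. j + 1" and j="\<lambda>j. j - 1"]) auto
    finally show ?thesis .
  qed
  ultimately show ?thesis by simp
qed

definition vert :: "real \<Rightarrow> real \<Rightarrow> nat \<Rightarrow> nat \<Rightarrow> real" where
  "vert L U k i = (if i \<le> k then U else L)"

definition V :: "nat \<Rightarrow> nat \<Rightarrow> real \<Rightarrow> real \<Rightarrow> (nat \<Rightarrow> real) \<Rightarrow> nat \<Rightarrow> real" where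
  "V n m L U a k = Gf n m a (vert L U k)"

definition Glin :: "nat \<Rightarrow> nat \<Rightarrow> (nat \<Rightarrow> real) \<Rightarrow> (nat \<Rightarrow> real) \<Rightarrow> real" where
  "Glin n m a x = (\<Sum>j=1..n-1. a j * ((real n - real j) * x j + real j * x (Suc j))) - real m * x (Suc m)"

lemma Gf_Glin: "Gf n m a x = real n * a 0 + Glin n m a x"
  by (simp add: Gf_def Glin_def)

lemma Glin_cong:
  assumes h: "\<And>j. 1 \<le> j \<Longrightarrow> j \<le> n \<Longrightarrow> x j = y j" and m: "m < n"
  shows "Glin n m a x = Glin n m a y"
proof -
  have "(\<Sum>j=1..n-1. a j * ((real n - real j) * x j + real j * x (Suc j))) =
        (\<Sum>j=1..n-1. a j * ((real n - real j) * y j + real j * y (Suc j)))"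
  proof (rule sum.cong[OF refl])
    fix j assume "j \<in> {1..n-1}"
    then have "x j = y j" "x (Suc j) = y (Suc j)" using h by auto
    then show "a j * ((real n - real j) * x j + real j * x (Suc j)) = a j * ((real n - real j) * y j + real j * y (Suc j))"
      by simp
  qed
  moreover have "x (Suc m) = y (Suc m)" using h m by simp
  ultimately show ?thesis unfolding Glin_def by simp
qed

lemma Gf_cong:
  assumes "\<And>j. 1 \<le> j \<Longrightarrow> j \<le> n \<Longrightarrow> x j = y j" and "m < n"
  shows "Gf n m a x = Gf n m a y"
  unfolding Gf_Glin using Glin_cong[OF assms] by simp

lemma Glin_lin: "Glin n m a (\<lambda>i. \<Sum>k\<in>K. w k * y k i) = (\<Sum>k\<in>K. w k * Glin n m a (y k))"
proof -
  have 1: "(\<Sum>k\<in>K. w k * Glin n m a (y k)) =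
     (\<Sum>k\<in>K. \<Sum>j=1..n-1. w k * (a j * ((real n - real j) * y k j + real j * y k (Suc j)))) - (\<Sum>k\<in>K. w k * (real m * y k (Suc m)))"
    unfolding Glin_def by (simp only: right_diff_distrib sum_subtractf sum_distrib_left)
  have 2: "(\<Sum>k\<in>K. \<Sum>j=1..n-1. w k * (a j * ((real n - real j) * y k j + real j * y k (Suc j)))) =
     (\<Sum>j=1..n-1. \<Sum>k\<in>K. w k * (a j * ((real n - real j) * y k j + real j * y k (Suc j))))"
    by (rule sum.swap)
  have 3: "(\<Sum>j=1..n-1. \<Sum>k\<in>K. w k * (a j * ((real n - real j) * y k j + real j * y k (Suc j)))) =
     (\<Sum>j=1..n-1. a j * ((real n - real j) * (\<Sum>k\<in>K. w k * y k j) + real j * (\<Sum>k\<in>K. w k * y k (Suc j))))"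
    by (rule sum.cong[OF refl]) (simp add: sum_distrib_left sum.distrib distrib_left mult.assoc mult.left_commute)
  have 4: "(\<Sum>k\<in>K. w k * (real m * y k (Suc m))) = real m * (\<Sum>k\<in>K. w k * y k (Suc m))"
    by (simp add: sum_distrib_left mult.left_commute)
  have 5: "Glin n m a (\<lambda>i. \<Sum>k\<in>K. w k * y k i) = (\<Sum>j=1..n-1. a j * ((real n - real j) * (\<Sum>k\<in>K. w k * y k j) + real j * (\<Sum>k\<in>K. w k * y k (Suc j)))) - real m * (\<Sum>k\<in>K. w k * y k (Suc m))"
    unfolding Glin_def ..
  show ?thesis unfolding 5 1 2 3 4 ..
qed

lemma V_nonpos:
  assumes eff: "efficient n m L U f" and fe: "feasible n L U (linear_mech n m f a)"
    and m: "1 \<le> m" "m < n" and LU: "L \<le> U"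
  shows "V n m L U a k \<le> 0"
proof -
  define \<theta> where "\<theta> j = (if j < k then U else L)" for j
  have tp: "\<theta> \<in> type_profiles n L U" using LU by (simp add: type_profiles_def \<theta>_def)
  have dec: "\<And>i j. i \<le> j \<Longrightarrow> j < n \<Longrightarrow> \<theta> j \<le> \<theta> i" using LU by (simp add: \<theta>_def)
  have "(\<Sum>i<n. linear_mech n m f a i \<theta>) \<le> 0" using fe tp by (simp add: feasible_def)
  moreover have "topm n m \<theta> \<le> (\<Sum>j<n. valuation (f \<theta>) j (\<theta> j))"
    using W_ge_dec[OF eff tp] m dec by simp
  moreover have "1 \<le> real n" using m by simp
  ultimately have "Gf n m a (X n \<theta>) \<le> 0"
    using S_formula[OF m, of f a \<theta>] by (smt (verit) mult_nonneg_nonneg)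
  moreover have "Gf n m a (X n \<theta>) = V n m L U a k"
    unfolding V_def using m by (intro Gf_cong) (auto simp: X_dec[OF dec] \<theta>_def vert_def)
  ultimately show ?thesis by simp
qed

lemma bary:
  assumes x0: "x 0 = U" and xn: "x (Suc n) = L" and m: "m < n"
  shows "(\<Sum>k\<le>n. (x k - x (Suc k)) * V n m L U a k) = (U - L) * Gf n m a x"
proof -
  define d where "d k = x k - x (Suc k)" for k
  have K1: "(\<Sum>k\<le>n. d k) = U - L"
    using sum_lessThan_telescope'[of x "Suc n"] x0 xn by (simp add: d_def lessThan_Suc_atMost)
  have K2: "(\<Sum>k\<le>n. d k * vert L U k i) = (U - L) * x i" if i: "i \<le> Suc n" for i
  proof -
    have "(\<Sum>k\<le>n. d k * vert L U k i) = (\<Sum>k\<in>{..n} \<inter> {k. i \<le> k}. d k * U) + (\<Sum>k\<in>{..n} \<inter> - {k. i \<le> k}. d k * L)"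
      unfolding vert_def by (simp add: if_distrib sum.If_cases)
    also have "{..n} \<inter> {k. i \<le> k} = {i..n}" by auto
    also have "{..n} \<inter> - {k. i \<le> k} = {..<i}" using i by auto
    also have "(\<Sum>k\<in>{i..n}. d k * U) = U * (x i - x (Suc n))"
    proof -
      have "(\<Sum>k\<in>{i..n}. x (Suc k) - x k) = x (Suc n) - x i" using i by (rule sum_Suc_diff)
      then have "(\<Sum>k\<in>{i..n}. d k) = x i - x (Suc n)"
        unfolding d_def by (simp add: sum_subtractf)
      then show ?thesis by (simp add: sum_distrib_left[symmetric] mult.commute)
    qed
    also have "(\<Sum>k<i. d k * L) = L * (x 0 - x i)"
      using sum_lessThan_telescope'[of x i] by (simp add: d_def sum_distrib_left[symmetric] mult.commute)
    finally show ?thesis using x0 xn by (simp add: algebra_simps)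
  qed
  have "(\<Sum>k\<le>n. d k * V n m L U a k) = (\<Sum>k\<le>n. d k * (real n * a 0) + d k * Glin n m a (vert L U k))"
    by (simp add: V_def Gf_Glin algebra_simps)
  also have "\<dots> = (U - L) * (real n * a 0) + Glin n m a (\<lambda>i. \<Sum>k\<le>n. d k * vert L U k i)"
    by (simp add: sum.distrib K1 Glin_lin flip: sum_distrib_right)
  also have "Glin n m a (\<lambda>i. \<Sum>k\<le>n. d k * vert L U k i) = Glin n m a (\<lambda>i. (U - L) * x i)"
    using m by (intro Glin_cong) (auto simp: K2)
  also have "\<dots> = (U - L) * Glin n m a x"
    unfolding Glin_def by (simp add: algebra_simps sum_distrib_left)
  finally show ?thesis by (simp add: d_def Gf_Glin algebra_simps)
qed

lemma dom_lemma:
  assumes gr: "groves n L U f t" and fe: "feasible n L U t" and dp: "\<delta> > 0" and n: "1 \<le> n"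
    and c: "\<forall>j<n-1. c j \<in> {L..U}" and LU: "L \<le> U"
    and bound: "\<forall>\<theta>\<in>type_profiles n L U. (\<forall>j<n-1. \<theta> j = c j) \<longrightarrow> (\<Sum>i<n. t i \<theta>) \<le> -\<delta>"
  shows "\<exists>t'. groves n L U f t' \<and> feasible n L U t' \<and> dominates n L U t' t"
proof -
  define P where "P \<theta> = (\<forall>j<n-1. \<theta> j = c j)" for \<theta> :: "nat \<Rightarrow> real"
  define t' where "t' i \<theta> = t i \<theta> + (if i = n - 1 \<and> P \<theta> then \<delta> else 0)" for i \<theta>
  have sumind: "(\<Sum>i<n. (if i = n - 1 \<and> P \<theta> then \<delta> else 0)) = (if P \<theta> then \<delta> else 0)" for \<theta>
  proof (cases "P \<theta>")
    case True
    then have "(\<Sum>i<n. (if i = n - 1 \<and> P \<theta> then \<delta> else 0)) = (\<Sum>i<n. (if i = n - 1 then \<delta> else 0))" by simp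
    also have "\<dots> = \<delta>" using n by (subst sum.delta) auto
    finally show ?thesis using True by simp
  next
    case False
    then show ?thesis by simp
  qed
  have g': "groves n L U f t'"
  proof -
    obtain h where h1: "\<forall>i<n. depends_only_on_others n i (h i)"
      and h2: "\<forall>\<theta>\<in>type_profiles n L U. \<forall>i<n. t i \<theta> = (\<Sum>j\<in>{..<n} - {i}. valuation (f \<theta>) j (\<theta> j)) + h i \<theta>"
      using gr unfolding groves_def by blast
    define h' where "h' i \<theta> = h i \<theta> + (if i = n - 1 \<and> P \<theta> then \<delta> else 0)" for i \<theta>
    have "\<forall>i<n. depends_only_on_others n i (h' i)"
    proof (intro allI impI)
      fix i assume i: "i < n"
      show "depends_only_on_others n i (h' i)"
        unfolding depends_only_on_others_def
      proof (intro allI impI)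
        fix \<theta> \<theta>' :: "nat \<Rightarrow> real" assume ag: "\<forall>j<n. j \<noteq> i \<longrightarrow> \<theta> j = \<theta>' j"
        have "h i \<theta> = h i \<theta>'" using h1 i ag unfolding depends_only_on_others_def by blast
        moreover have "i = n - 1 \<Longrightarrow> P \<theta> = P \<theta>'" using ag unfolding P_def by auto
        ultimately show "h' i \<theta> = h' i \<theta>'" unfolding h'_def by auto
      qed
    qed
    moreover have "\<forall>\<theta>\<in>type_profiles n L U. \<forall>i<n. t' i \<theta> = (\<Sum>j\<in>{..<n} - {i}. valuation (f \<theta>) j (\<theta> j)) + h' i \<theta>"
      using h2 by (simp add: t'_def h'_def)
    ultimately show ?thesis unfolding groves_def by blast
  qed
  have f': "feasible n L U t'"
    unfolding feasible_def
  proof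
    fix \<theta> assume tp: "\<theta> \<in> type_profiles n L U"
    have "(\<Sum>i<n. t' i \<theta>) = (\<Sum>i<n. t i \<theta>) + (if P \<theta> then \<delta> else 0)"
      by (simp only: t'_def sum.distrib sumind)
    moreover have "(\<Sum>i<n. t i \<theta>) \<le> 0" using fe tp by (simp add: feasible_def)
    moreover have "P \<theta> \<Longrightarrow> (\<Sum>i<n. t i \<theta>) \<le> -\<delta>" using bound tp by (simp add: P_def)
    ultimately show "(\<Sum>i<n. t' i \<theta>) \<le> 0" by (cases "P \<theta>") auto
  qed
  have d': "dominates n L U t' t"
    unfolding dominates_def
  proof
    show "\<forall>\<theta>\<in>type_profiles n L U. \<forall>i<n. t i \<theta> \<le> t' i \<theta>" using dp by (simp add: t'_def)
    define \<theta>s where "\<theta>s j = (if j < n - 1 then c j else L)" for j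
    have "\<theta>s \<in> type_profiles n L U" using c LU by (auto simp: type_profiles_def \<theta>s_def)
    moreover have "P \<theta>s" by (simp add: P_def \<theta>s_def)
    ultimately show "\<exists>\<theta>\<in>type_profiles n L U. \<exists>i<n. t i \<theta> < t' i \<theta>"
      using dp n by (intro bexI[of _ \<theta>s] exI[of _ "n - 1"]) (auto simp: t'_def)
  qed
  show ?thesis using g' f' d' by blast
qed

lemma gaps:
  assumes tp: "\<theta> \<in> type_profiles n L U" and LU: "L < U" and n: "2 \<le> n"
    and hdef: "h = (U - L) / real n"
    and \<theta>c: "\<And>j. j < n - 1 \<Longrightarrow> \<theta> j = U - real (Suc j) * h"
    and edef: "e = (\<lambda>k. if k = 0 then U else if k = Suc n then L else X n \<theta> k)"
    and k: "k \<le> n"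
  shows "0 \<le> e k - e (Suc k) \<and> e k - e (Suc k) \<le> h"
proof -
  define as where "as = sort (map \<theta> [0..<n])"
  have las: "length as = n" and sas: "sorted as" by (simp_all add: as_def)
  have setas: "set as = \<theta> ` {..<n}" by (simp add: as_def atLeast0LessThan)
  have bnd: "L \<le> as ! q \<and> as ! q \<le> U" if "q < n" for q
  proof -
    have "as ! q \<in> set as" using that las by simp
    then obtain j where "j < n" "as ! q = \<theta> j" using setas by auto
    then show ?thesis using tp by (simp add: type_profiles_def)
  qed
  have ek: "e k' = as ! (n - k')" if "1 \<le> k'" "k' \<le> n" for k'
    using that by (simp add: edef as_def X_nth)
  have hpos: "h > 0" using LU n by (simp add: hdef)
  define A where "A = e (Suc k)"
  define B where "B = e k"
  have AL: "L \<le> A" and BU: "B \<le> U"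
    using k bnd ek n by (auto simp: A_def B_def edef as_def X_nth)
  have sep: "as ! q \<le> A \<or> B \<le> as ! q" if q: "q < n" for q
  proof (cases "k = 0")
    case True
    then have "A = as ! (n - 1)" using ek[of 1] n by (simp add: A_def)
    then show ?thesis using sorted_nth_mono[OF sas, of q "n - 1"] q las by auto
  next
    case False
    show ?thesis
    proof (cases "k = n")
      case True
      then have "B = as ! 0" using ek[of n] n by (simp add: B_def)
      then show ?thesis using sorted_nth_mono[OF sas, of 0 q] q las by auto
    next
      case False
      then have "A = as ! (n - Suc k)" "B = as ! (n - k)" using ek[of k] ek[of "Suc k"] k \<open>k \<noteq> 0\<close>
        by (auto simp: A_def B_def)
      then show ?thesis using sorted_nth_mono[OF sas, of q "n - Suc k"] sorted_nth_mono[OF sas, of "n - k" q] q las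
        by (cases "q \<le> n - Suc k") auto
    qed
  qed
  have nonneg: "A \<le> B"
  proof (cases "k = 0")
    case True
    then show ?thesis using ek[of 1] n bnd[of "n - 1"] by (simp add: A_def B_def edef)
  next
    case False
    show ?thesis
    proof (cases "k = n")
      case True
      then show ?thesis using ek[of n] n bnd[of 0] by (simp add: A_def B_def edef)
    next
      case False
      then show ?thesis using ek[of k] ek[of "Suc k"] k \<open>k \<noteq> 0\<close> sorted_nth_mono[OF sas, of "n - Suc k" "n - k"] las
        by (auto simp: A_def B_def)
    qed
  qed
  have le: "B - A \<le> h"
  proof (rule ccontr)
    assume "\<not> B - A \<le> h"
    then have gap: "A + h < B" by simp
    define r where "r = (U - B) / h"
    have r0: "0 \<le> r" using BU hpos by (simp add: r_def)
    define j where "j = nat \<lfloor>r\<rfloor> + 1"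
    have jr: "real j = real_of_int \<lfloor>r\<rfloor> + 1" using r0 by (simp add: j_def)
    have j1: "r < real j" "real j \<le> r + 1" using jr by linarith+
    define g where "g = U - real j * h"
    have gB: "g < B"
    proof -
      have "U - B < real j * h" using j1(1) hpos by (simp add: r_def pos_divide_less_eq)
      then show ?thesis by (simp add: g_def)
    qed
    have gA: "A < g"
    proof -
      have "real j * h \<le> (r + 1) * h" using j1(2) hpos by (simp add: mult_right_mono)
      also have "\<dots> = U - B + h" using hpos by (simp add: r_def field_simps)
      finally show ?thesis using gap by (simp add: g_def)
    qed
    have jn: "j < n"
    proof -
      have "L = U - real n * h" using n by (simp add: hdef)
      then have "real j * h < real n * h" using gA AL by (simp add: g_def)
      then have "real j < real n" using hpos by simp
      then show ?thesis by simp
    qed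
    have j0: "1 \<le> j" by (simp add: j_def)
    have "g = \<theta> (j - 1)" using \<theta>c[of "j - 1"] jn j0 by (simp add: g_def)
    then have "g \<in> set as" using setas jn by auto
    then obtain q where q: "q < n" "as ! q = g" using las by (auto simp: in_set_conv_nth)
    show False using sep[OF q(1)] q(2) gA gB by auto
  qed
  show ?thesis using nonneg le by (simp add: A_def B_def)
qed

lemma split_pq:
  fixes n p q :: nat
  assumes "p \<le> n" "q \<le> n" "p \<noteq> q"
  shows "(\<Sum>k\<le>n. g k) = g p + g q + (\<Sum>k\<in>{..n} - {p, q}. (g k :: real))"
proof -
  have "(\<Sum>k\<le>n. g k) = (\<Sum>k\<in>{..n} - {p, q}. g k) + (\<Sum>k\<in>{p, q}. g k)"
    using assms by (intro sum.subset_diff) auto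
  then show ?thesis using assms by simp
qed

lemma two_neg:
  assumes n: "2 \<le> n" and m: "1 \<le> m" "m < n" and LU: "L < U"
    and eff: "efficient n m L U f" and fe: "feasible n L U (linear_mech n m f a)"
    and und: "undominated n L U f (linear_mech n m f a)"
    and pq: "p \<le> n" "q \<le> n" "p \<noteq> q"
  shows "\<not> (V n m L U a p < 0 \<and> V n m L U a q < 0)"
proof
  assume neg: "V n m L U a p < 0 \<and> V n m L U a q < 0"
  define M where "M = max (V n m L U a p) (V n m L U a q)"
  have M0: "M < 0" using neg by (simp add: M_def)
  define h where "h = (U - L) / real n"
  have hpos: "h > 0" using LU n by (simp add: h_def)
  have Ueq: "U - L = real n * h" using n by (simp add: h_def)
  define c where "c j = U - real (Suc j) * h" for j
  define \<delta> where "\<delta> = - M / real n"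
  have dpos: "\<delta> > 0" using M0 n by (simp add: \<delta>_def divide_neg_pos)
  have Vall: "\<And>k. V n m L U a k \<le> 0" using V_nonpos[OF eff fe m] LU by simp
  have cb: "\<forall>j<n-1. c j \<in> {L..U}"
  proof (intro allI impI)
    fix j assume j: "j < n - 1"
    have "real (Suc j) * h \<le> real n * h" using j hpos by (intro mult_right_mono) auto
    moreover have "0 \<le> real (Suc j) * h" using hpos by simp
    ultimately show "c j \<in> {L..U}" using Ueq by (simp add: c_def)
  qed
  have bound: "\<forall>\<theta>\<in>type_profiles n L U. (\<forall>j<n-1. \<theta> j = c j) \<longrightarrow> (\<Sum>i<n. linear_mech n m f a i \<theta>) \<le> -\<delta>"
  proof (intro ballI impI)
    fix \<theta> assume tp: "\<theta> \<in> type_profiles n L U" and \<theta>c: "\<forall>j<n-1. \<theta> j = c j"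
    define e where "e = (\<lambda>k. if k = 0 then U else if k = Suc n then L else X n \<theta> k)"
    define d where "d k = e k - e (Suc k)" for k
    have dk: "0 \<le> d k \<and> d k \<le> h" if "k \<le> n" for k
      unfolding d_def by (rule gaps[OF tp LU n h_def _ e_def that]) (use \<theta>c in \<open>simp add: c_def\<close>)
    have GX: "Gf n m a (X n \<theta>) = Gf n m a e"
      using m by (intro Gf_cong) (auto simp: e_def)
    have bar: "(\<Sum>k\<le>n. d k * V n m L U a k) = (U - L) * Gf n m a e"
      unfolding d_def by (rule bary) (simp_all add: e_def m)
    have sumd: "(\<Sum>k\<le>n. d k) = U - L"
      using sum_lessThan_telescope'[of e "Suc n"] by (simp add: d_def e_def lessThan_Suc_atMost)
    define R where "R = {..n} - {p, q}"
    have cardR: "card R = n - 1" using pq by (simp add: R_def card_Diff_subset)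
    have "(\<Sum>k\<in>R. d k) \<le> real (card R) * h"
      using dk by (intro sum_bounded_above) (auto simp: R_def)
    then have sR: "(\<Sum>k\<in>R. d k) \<le> (real n - 1) * h" using cardR n by (simp add: of_nat_diff)
    have "U - L = d p + d q + (\<Sum>k\<in>R. d k)" using sumd split_pq[OF pq, of d] by (simp add: R_def)
    then have dpq: "h \<le> d p + d q" using sR Ueq by (simp add: algebra_simps)
    have sRV: "(\<Sum>k\<in>R. d k * V n m L U a k) \<le> 0"
      using dk Vall by (intro sum_nonpos) (auto simp: R_def mult_nonneg_nonpos)
    have "d p * V n m L U a p \<le> d p * M" using dk[OF pq(1)] by (intro mult_left_mono) (auto simp: M_def)
    moreover have "d q * V n m L U a q \<le> d q * M" using dk[OF pq(2)] by (intro mult_left_mono) (auto simp: M_def)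
    moreover have "(d p + d q) * M \<le> h * M" using dpq M0 by (intro mult_right_mono_neg) auto
    ultimately have "(\<Sum>k\<le>n. d k * V n m L U a k) \<le> h * M"
      using split_pq[OF pq, of "\<lambda>k. d k * V n m L U a k"] sRV by (simp add: R_def algebra_simps)
    then have "real n * h * Gf n m a e \<le> h * M" using bar Ueq by simp
    then have "real n * Gf n m a e \<le> M" using hpos by (simp add: mult.assoc)
    then have Ge: "Gf n m a e \<le> -\<delta>" using n by (simp add: \<delta>_def field_simps)
    have "(\<Sum>j<n. valuation (f \<theta>) j (\<theta> j)) \<le> topm n m \<theta>" using W_le[OF eff tp] m by simp
    moreover have "0 \<le> real n - 1" using n by simp
    ultimately have "(real n - 1) * ((\<Sum>j<n. valuation (f \<theta>) j (\<theta> j)) - topm n m \<theta>) \<le> 0"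
      by (simp add: mult_nonneg_nonpos)
    then show "(\<Sum>i<n. linear_mech n m f a i \<theta>) \<le> -\<delta>"
      using S_formula[OF m, of f a \<theta>] GX Ge by simp
  qed
  have "\<exists>t'. groves n L U f t' \<and> feasible n L U t' \<and> dominates n L U t' (linear_mech n m f a)"
    using und fe dpos n cb LU bound by (intro dom_lemma) (auto simp: undominated_def)
  then show False using und by (simp add: undominated_def)
qed

definition D :: "nat \<Rightarrow> nat \<Rightarrow> (nat \<Rightarrow> real) \<Rightarrow> nat \<Rightarrow> real" where
  "D n m a j = (real j - 1) * a (j - 1) + (real n - real j) * a j - (if j = Suc m then real m else 0)"

lemma Glin_diff: "Glin n m a x - Glin n m a y =
  (\<Sum>i=1..n-1. a i * ((real n - real i) * (x i - y i) + real i * (x (Suc i) - y (Suc i)))) - real m * (x (Suc m) - y (Suc m))"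
proof -
  have "(\<Sum>i=1..n-1. a i * ((real n - real i) * (x i - y i) + real i * (x (Suc i) - y (Suc i)))) =
     (\<Sum>i=1..n-1. a i * ((real n - real i) * x i + real i * x (Suc i)) - a i * ((real n - real i) * y i + real i * y (Suc i)))"
    by (rule sum.cong[OF refl]) (simp add: algebra_simps)
  also have "\<dots> = (\<Sum>i=1..n-1. a i * ((real n - real i) * x i + real i * x (Suc i))) - (\<Sum>i=1..n-1. a i * ((real n - real i) * y i + real i * y (Suc i)))"
    by (rule sum_subtractf)
  finally show ?thesis unfolding Glin_def by (simp add: algebra_simps)
qed

lemma vert_diff: "1 \<le> j \<Longrightarrow> vert L U j i - vert L U (j - 1) i = (if i = j then U - L else 0)"
  by (auto simp: vert_def)

lemma V_diff:
  assumes j: "1 \<le> j" "j \<le> n" and m: "m < n"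
  shows "V n m L U a j - V n m L U a (j - 1) = (U - L) * D n m a j"
proof -
  have "V n m L U a j - V n m L U a (j - 1) = Glin n m a (vert L U j) - Glin n m a (vert L U (j - 1))"
    by (simp add: V_def Gf_Glin)
  also have "\<dots> = (\<Sum>i=1..n-1. a i * ((real n - real i) * (if i = j then U - L else 0) + real i * (if i = j - 1 then U - L else 0)))
       - real m * (if Suc m = j then U - L else 0)"
  proof -
    have "(\<Sum>i=1..n-1. a i * ((real n - real i) * (vert L U j i - vert L U (j - 1) i) + real i * (vert L U j (Suc i) - vert L U (j - 1) (Suc i))))
       = (\<Sum>i=1..n-1. a i * ((real n - real i) * (if i = j then U - L else 0) + real i * (if i = j - 1 then U - L else 0)))"
    proof (rule sum.cong[OF refl])
      fix i assume "i \<in> {1..n-1}"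
      have "(Suc i = j) = (i = j - 1)" using j by auto
      then show "a i * ((real n - real i) * (vert L U j i - vert L U (j - 1) i) + real i * (vert L U j (Suc i) - vert L U (j - 1) (Suc i)))
          = a i * ((real n - real i) * (if i = j then U - L else 0) + real i * (if i = j - 1 then U - L else 0))"
        by (simp only: vert_diff[OF j(1)])
    qed
    then show ?thesis unfolding Glin_diff by (simp only: vert_diff[OF j(1)])
  qed
  also have "(\<Sum>i=1..n-1. a i * ((real n - real i) * (if i = j then U - L else 0) + real i * (if i = j - 1 then U - L else 0)))
      = (\<Sum>i=1..n-1. (if i = j then a i * (real n - real i) * (U - L) else 0)) + (\<Sum>i=1..n-1. (if i = j - 1 then a i * real i * (U - L) else 0))"
    unfolding sum.distrib[symmetric]
  proof (rule sum.cong[OF refl])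
    fix i
    show "a i * ((real n - real i) * (if i = j then U - L else 0) + real i * (if i = j - 1 then U - L else 0)) =
      (if i = j then a i * (real n - real i) * (U - L) else 0) + (if i = j - 1 then a i * real i * (U - L) else 0)"
      using j by (cases "i = j"; cases "i = j - 1") (auto simp: algebra_simps)
  qed
  also have "(\<Sum>i=1..n-1. (if i = j then a i * (real n - real i) * (U - L) else 0)) = a j * (real n - real j) * (U - L)"
    using j by (subst sum.delta) auto
  also have "(\<Sum>i=1..n-1. (if i = j - 1 then a i * real i * (U - L) else 0)) = a (j - 1) * (real j - 1) * (U - L)"
    using j by (subst sum.delta) (auto simp: of_nat_diff)
  finally show ?thesis by (auto simp: D_def algebra_simps)
qed

lemma Gf_const: "Gf n m a (\<lambda>_. c) = real n * a 0 + real n * c * (\<Sum>i=1..n-1. a i) - real m * c"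
proof -
  have "(\<Sum>j=1..n-1. a j * ((real n - real j) * c + real j * c)) = (\<Sum>j=1..n-1. real n * c * a j)"
    by (rule sum.cong[OF refl]) (simp add: algebra_simps)
  then show ?thesis unfolding Gf_def by (simp add: sum_distrib_left)
qed

lemma V0: "m < n \<Longrightarrow> V n m L U a 0 = real n * a 0 + real n * L * (\<Sum>i=1..n-1. a i) - real m * L"
  unfolding V_def by (subst Gf_cong[where y="\<lambda>_. L"]) (auto simp: vert_def Gf_const)

lemma Vn: "m < n \<Longrightarrow> V n m L U a n = real n * a 0 + real n * U * (\<Sum>i=1..n-1. a i) - real m * U"
  unfolding V_def by (subst Gf_cong[where y="\<lambda>_. U"]) (auto simp: vert_def Gf_const)

definition Lam :: "nat \<Rightarrow> nat \<Rightarrow> real" where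
  "Lam n j = (-1) ^ (j - 1) * real ((n - 1) choose (j - 1))"

lemma Lam_term:
  assumes i: "1 \<le> i" "i \<le> n - 1"
  shows "Lam n (Suc i) * real i + Lam n i * (real n - real i) = 0"
proof -
  obtain i' where i': "i = Suc i'" using i by (cases i) auto
  have c1: "i * ((n - 1) choose i) = (n - 1) * ((n - 2) choose i')"
    using times_binomial_minus1_eq[of i "n - 1"] i' by (simp add: numeral_2_eq_2)
  have c2: "(n - i) * ((n - 1) choose i') = (n - 1) * ((n - 2) choose i')"
    using binomial_absorb_comp[of "n - 1" i'] i' by (simp add: numeral_2_eq_2)
  have "real (i * ((n - 1) choose i)) = real ((n - i) * ((n - 1) choose i'))"
    using c1 c2 by simp
  then have e0: "real i * real ((n - 1) choose i) = real (n - i) * real ((n - 1) choose i')"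
    by (simp only: of_nat_mult)
  have ni: "real (n - i) = real n - real i" using i by (simp add: of_nat_diff)
  have e: "real ((n - 1) choose i) * real i = real ((n - 1) choose i') * (real n - real i)"
    using e0 ni by (simp add: mult.commute)
  have 1: "Lam n (Suc i) * real i = - ((-1) ^ i' * (real ((n - 1) choose i) * real i))"
    unfolding Lam_def using i' by simp
  have 2: "Lam n i * (real n - real i) = (-1) ^ i' * (real ((n - 1) choose i') * (real n - real i))"
    unfolding Lam_def using i' by simp
  show ?thesis unfolding 1 2 e by simp
qed

lemma Lam_D:
  assumes n: "2 \<le> n" and m: "m < n"
  shows "(\<Sum>j=1..n. Lam n j * D n m a j) = - real m * Lam n (Suc m)"
proof -
  obtain n' where n': "n = Suc n'" using n by (cases n) auto
  have "(\<Sum>j=1..n. Lam n j * D n m a j) = (\<Sum>j=1..n. Lam n j * (real j - 1) * a (j - 1))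
      + (\<Sum>j=1..n. Lam n j * (real n - real j) * a j) - (\<Sum>j=1..n. if j = Suc m then Lam n j * real m else 0)"
  proof -
    have "(\<Sum>j=1..n. Lam n j * D n m a j) = (\<Sum>j=1..n. Lam n j * (real j - 1) * a (j - 1)
      + Lam n j * (real n - real j) * a j - (if j = Suc m then Lam n j * real m else 0))"
      by (rule sum.cong[OF refl]) (simp add: D_def algebra_simps)
    then show ?thesis by (simp only: sum.distrib sum_subtractf)
  qed
  also have "(\<Sum>j=1..n. if j = Suc m then Lam n j * real m else 0) = Lam n (Suc m) * real m"
    using m by (subst sum.delta) auto
  also have "(\<Sum>j=1..n. Lam n j * (real j - 1) * a (j - 1)) = (\<Sum>i=1..n-1. Lam n (Suc i) * real i * a i)"
  proof -
    have "(\<Sum>j=1..n. Lam n j * (real j - 1) * a (j - 1)) = (\<Sum>j=Suc 1..Suc n'. Lam n j * (real j - 1) * a (j - 1))"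
      using n' by (subst sum.atLeast_Suc_atMost) auto
    also have "\<dots> = (\<Sum>i=1..n'. Lam n (Suc i) * real i * a i)"
      by (subst sum.shift_bounds_cl_Suc_ivl) simp
    finally show ?thesis using n' by simp
  qed
  also have "(\<Sum>j=1..n. Lam n j * (real n - real j) * a j) = (\<Sum>i=1..n-1. Lam n i * (real n - real i) * a i)"
    using n' by (simp add: sum.cl_ivl_Suc)
  also have "(\<Sum>i=1..n-1. Lam n (Suc i) * real i * a i) + (\<Sum>i=1..n-1. Lam n i * (real n - real i) * a i) = 0"
  proof -
    have "(\<Sum>i=1..n-1. Lam n (Suc i) * real i * a i) + (\<Sum>i=1..n-1. Lam n i * (real n - real i) * a i)
        = (\<Sum>i=1..n-1. (Lam n (Suc i) * real i + Lam n i * (real n - real i)) * a i)"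
      by (simp add: sum.distrib[symmetric] algebra_simps)
    also have "\<dots> = 0" by (rule sum.neutral) (auto simp: Lam_term)
    finally show ?thesis .
  qed
  finally show ?thesis by simp
qed

lemma Lam_edge:
  assumes "k \<le> n" "1 \<le> n"
  shows "(if 1 \<le> k then Lam n k else 0) - (if Suc k \<le> n then Lam n (Suc k) else 0) = (-1) ^ (k + 1) * real (n choose k)"
proof -
  obtain n' where n': "n = Suc n'" using assms by (cases n) auto
  show ?thesis
  proof (cases "k = 0")
    case True
    then show ?thesis using n' by (simp add: Lam_def)
  next
    case False
    then obtain k' where k': "k = Suc k'" by (cases k) auto
    show ?thesis
    proof (cases "k = n")
      case True
      then show ?thesis using n' k' by (simp add: Lam_def)
    next
      case False
      then have "Suc k \<le> n" using assms by simp
      then show ?thesis using n' k' by (simp add: Lam_def algebra_simps)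
    qed
  qed
qed

lemma parity:
  assumes n: "2 \<le> n" and m: "1 \<le> m" "m < n" and LU: "L < U" and k: "k \<le> n"
    and Vz: "\<forall>j\<le>n. j \<noteq> k \<longrightarrow> V n m L U a j = 0" and Vk: "V n m L U a k \<le> 0"
  shows "odd (int k - int m)"
proof -
  define v where "v = V n m L U a k"
  have Vj: "V n m L U a j = (if j = k then v else 0)" if "j \<le> n" for j
    using Vz that by (auto simp: v_def)
  have "(U - L) * (\<Sum>j=1..n. Lam n j * D n m a j) = (\<Sum>j=1..n. Lam n j * (V n m L U a j - V n m L U a (j - 1)))"
  proof -
    have "(U - L) * (\<Sum>j=1..n. Lam n j * D n m a j) = (\<Sum>j=1..n. (U - L) * (Lam n j * D n m a j))"
      by (rule sum_distrib_left)
    also have "\<dots> = (\<Sum>j=1..n. Lam n j * (V n m L U a j - V n m L U a (j - 1)))"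
    proof (rule sum.cong[OF refl])
      fix j assume "j \<in> {1..n}"
      then have "V n m L U a j - V n m L U a (j - 1) = (U - L) * D n m a j" using m by (intro V_diff) auto
      then show "(U - L) * (Lam n j * D n m a j) = Lam n j * (V n m L U a j - V n m L U a (j - 1))" by simp
    qed
    finally show ?thesis .
  qed
  also have "\<dots> = (\<Sum>j=1..n. (if j = k then Lam n j * v else 0) - (if j = Suc k then Lam n j * v else 0))"
  proof (rule sum.cong[OF refl])
    fix j assume j: "j \<in> {1..n}"
    then have "j - 1 \<le> n" "j \<le> n" "(j - 1 = k) = (j = Suc k)" by auto
    then show "Lam n j * (V n m L U a j - V n m L U a (j - 1)) = (if j = k then Lam n j * v else 0) - (if j = Suc k then Lam n j * v else 0)"
      by (simp add: Vj)
  qed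
  also have "\<dots> = (if 1 \<le> k then Lam n k * v else 0) - (if Suc k \<le> n then Lam n (Suc k) * v else 0)"
    using k by (simp add: sum_subtractf)
  also have "\<dots> = ((if 1 \<le> k then Lam n k else 0) - (if Suc k \<le> n then Lam n (Suc k) else 0)) * v"
    by (simp add: algebra_simps)
  also have "\<dots> = (-1) ^ (k + 1) * real (n choose k) * v"
  proof -
    have "(if 1 \<le> k then Lam n k else 0) - (if Suc k \<le> n then Lam n (Suc k) else 0) = (-1) ^ (k + 1) * real (n choose k)"
      by (rule Lam_edge) (use k n in auto)
    then show ?thesis by (simp only:)
  qed
  finally have eq0: "(U - L) * (\<Sum>j=1..n. Lam n j * D n m a j) = (-1) ^ (k + 1) * real (n choose k) * v" .
  have s: "(\<Sum>j=1..n. Lam n j * D n m a j) = - real m * Lam n (Suc m)" by (rule Lam_D[OF n m(2)])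
  have l: "Lam n (Suc m) = (-1) ^ m * real ((n - 1) choose m)" by (simp add: Lam_def)
  have eq: "(-1) ^ (k + 1) * real (n choose k) * v = - (U - L) * real m * ((-1) ^ m * real ((n - 1) choose m))"
  proof -
    have "(-1) ^ (k + 1) * real (n choose k) * v = (U - L) * (- real m * ((-1) ^ m * real ((n - 1) choose m)))"
      using eq0 unfolding s l by simp
    then show ?thesis by (simp only: mult_minus_left mult_minus_right mult.assoc)
  qed
  show ?thesis
  proof (rule ccontr)
    assume "\<not> odd (int k - int m)"
    then have ev: "even k = even m" by presburger
    have "real (n choose k) * v = (U - L) * real m * real ((n - 1) choose m)"
    proof (cases "even k")
      case True
      then show ?thesis using eq ev by (simp add: algebra_simps)
    next
      case False
      then show ?thesis using eq ev by (simp add: algebra_simps)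
    qed
    moreover have "0 < (U - L) * real m * real ((n - 1) choose m)"
      using LU m by simp
    moreover have "real (n choose k) * v \<le> 0"
      using Vk by (simp add: v_def mult_nonneg_nonpos)
    ultimately show False by simp
  qed
qed

lemma alpha_rec:
  assumes j: "2 \<le> j" "j \<le> m" and mn: "m < n"
  shows "(real j - 1) * alpha n m (j - 1) + (real n - real j) * alpha n m j = 0"
proof -
  obtain p where p: "j = Suc p" using j by (cases j) auto
  have p1: "1 \<le> p" using j p by simp
  define r where "r = n - m - 1"
  define A where "A = real ((n - j) choose r)"
  define B where "B = real ((n - j - 1) choose r)"
  define P where "P = real ((m - 1) choose (p - 1))"
  define Q where "Q = real ((m - 1) choose p)"
  have Ppos: "P > 0" using p1 j p by (simp add: P_def)
  have Qpos: "Q > 0" using j p by (simp add: Q_def)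
  have a1: "p * ((m - 1) choose p) = (m - 1) * ((m - 2) choose (p - 1))"
    using times_binomial_minus1_eq[of p "m - 1"] p1 by (simp add: numeral_2_eq_2)
  have a2: "(m - 1 - (p - 1)) * ((m - 1) choose (p - 1)) = (m - 1) * ((m - 2) choose (p - 1))"
    using binomial_absorb_comp[of "m - 1" "p - 1"] by (simp add: numeral_2_eq_2)
  have mp: "m - 1 - (p - 1) = m - p" using p1 by simp
  have fa: "real p * Q = (real m - real p) * P"
  proof -
    have "real (p * ((m - 1) choose p)) = real ((m - p) * ((m - 1) choose (p - 1)))"
      using a1 a2 mp by simp
    then show ?thesis using j p by (simp add: P_def Q_def of_nat_diff)
  qed
  have b1: "(n - j - r) * ((n - j) choose r) = (n - j) * ((n - j - 1) choose r)"
    by (rule binomial_absorb_comp)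
  have njr: "n - j - r = m - p" using j p mn by (simp add: r_def)
  have fb: "A * (real m - real p) = (real n - real j) * B"
  proof -
    have "real ((m - p) * ((n - j) choose r)) = real ((n - j) * ((n - j - 1) choose r))"
      using b1 njr by simp
    then show ?thesis using j p mn by (simp add: A_def B_def of_nat_diff mult.commute)
  qed
  have key: "real p * A * Q = (real n - real j) * B * P"
  proof -
    have "real p * A * Q = A * (real p * Q)" by simp
    also have "\<dots> = A * (real m - real p) * P" using fa by simp
    also have "\<dots> = (real n - real j) * B * P" using fb by simp
    finally show ?thesis .
  qed
  have e1: "alpha n m (j - 1) = - ((-1) ^ (m - j) * (A / P))"
  proof -
    have "m - p = Suc (m - j)" using j p by simp
    moreover have "n - p - 1 = n - j" using p by simp
    ultimately show ?thesis using p by (simp add: alpha_def A_def P_def r_def)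
  qed
  have e2: "alpha n m j = (-1) ^ (m - j) * (B / Q)"
    using p by (simp add: alpha_def B_def Q_def r_def)
  have "real p * A / P = (real n - real j) * B / Q"
    using key Ppos Qpos by (simp add: frac_eq_eq)
  then have "(real j - 1) * (A / P) = (real n - real j) * (B / Q)" using p by simp
  then have z: "(real n - real j) * (B / Q) - (real j - 1) * (A / P) = 0" by simp
  have gen: "\<And>u w s::real. (real j - 1) * (- (s * u)) + (real n - real j) * (s * w)
      = s * ((real n - real j) * w - (real j - 1) * u)"
    by (simp add: algebra_simps)
  show ?thesis unfolding e1 e2 gen z by simp
qed

lemma beta_rec:
  assumes j: "m + 2 \<le> j" "j \<le> n - 1" and m1: "1 \<le> m"
  shows "(real j - 1) * beta n m (j - 1) + (real n - real j) * beta n m j = 0"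
proof -
  define M where "M = n - m - 1"
  define A where "A = real ((j - 2) choose (m - 1))"
  define B where "B = real ((j - 1) choose (m - 1))"
  define P where "P = real (M choose (n - j))"
  define Q where "Q = real (M choose (n - j - 1))"
  have Ppos: "P > 0" using j by (simp add: P_def M_def)
  have Qpos: "Q > 0" using j by (simp add: Q_def M_def)
  have c0: "(j - 1 - (m - 1)) * ((j - 1) choose (m - 1)) = (j - 1) * ((j - 1 - 1) choose (m - 1))"
    by (rule binomial_absorb_comp)
  have jm: "j - 1 - (m - 1) = j - m" using j m1 by simp
  have fc: "B * (real j - real m) = (real j - 1) * A"
  proof -
    have "real ((j - m) * ((j - 1) choose (m - 1))) = real ((j - 1) * ((j - 2) choose (m - 1)))"
      using c0 jm by (simp add: numeral_2_eq_2)
    then show ?thesis using j by (simp add: A_def B_def of_nat_diff mult.commute)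
  qed
  have d1: "(n - j) * (M choose (n - j)) = M * ((M - 1) choose (n - j - 1))"
    using times_binomial_minus1_eq[of "n - j" M] j by simp
  have d2: "(M - (n - j - 1)) * (M choose (n - j - 1)) = M * ((M - 1) choose (n - j - 1))"
    by (rule binomial_absorb_comp)
  have Ms: "M - (n - j - 1) = j - m" using j by (simp add: M_def)
  have fd: "P * (real n - real j) = Q * (real j - real m)"
  proof -
    have "real ((n - j) * (M choose (n - j))) = real ((j - m) * (M choose (n - j - 1)))"
      using d1 d2 Ms by simp
    then show ?thesis using j by (simp add: P_def Q_def of_nat_diff mult.commute)
  qed
  have key: "(real j - 1) * A * Q = (real n - real j) * B * P"
  proof -
    have "(real j - 1) * A * Q = B * (real j - real m) * Q" using fc by simp
    also have "\<dots> = B * (Q * (real j - real m))" by simp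
    also have "\<dots> = B * (P * (real n - real j))" using fd by simp
    finally show ?thesis by simp
  qed
  have e1: "beta n m (j - 1) = (-1) ^ (j - m - 2) * (A / P)"
  proof -
    have "j - 1 - m - 1 = j - m - 2" by simp
    moreover have "j - 1 - 1 = j - 2" by simp
    moreover have "n - (j - 1) - 1 = n - j" using j by simp
    ultimately show ?thesis by (simp add: beta_def A_def P_def M_def)
  qed
  have e2: "beta n m j = - ((-1) ^ (j - m - 2) * (B / Q))"
  proof -
    have "j - m - 1 = Suc (j - m - 2)" using j by simp
    then show ?thesis by (simp add: beta_def B_def Q_def M_def)
  qed
  have "(real j - 1) * A / P = (real n - real j) * B / Q"
    using key Ppos Qpos by (simp add: frac_eq_eq)
  then have z: "(real j - 1) * (A / P) - (real n - real j) * (B / Q) = 0" by simp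
  have gen: "\<And>u w s::real. (real j - 1) * (s * u) + (real n - real j) * (- (s * w))
      = s * ((real j - 1) * u - (real n - real j) * w)"
    by (simp add: algebra_simps)
  show ?thesis unfolding e1 e2 gen z by simp
qed

lemma beta_first:
  assumes "m + 1 \<le> n - 1" "1 \<le> m"
  shows "(real n - real (Suc m)) * beta n m (Suc m) = real m"
proof -
  obtain m' where m': "m = Suc m'" using assms by (cases m) auto
  obtain q where q: "n - m - 1 = Suc q" using assms by (cases "n - m - 1") auto
  have "n - Suc m - 1 = q" using q by simp
  then have "beta n m (Suc m) = real m / real (n - m - 1)"
    using m' q by (simp add: beta_def)
  moreover have "real n - real (Suc m) = real (n - m - 1)" using assms by (simp add: of_nat_diff)
  moreover have "real (n - m - 1) > 0" using q by simp
  ultimately show ?thesis by simp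
qed

lemma alpha_last: "alpha n m m = 1"
  by (simp add: alpha_def)

definition eqs :: "nat \<Rightarrow> nat \<Rightarrow> real \<Rightarrow> real \<Rightarrow> nat \<Rightarrow> (nat \<Rightarrow> real) \<Rightarrow> bool" where
  "eqs n m L U k a \<longleftrightarrow> (\<forall>j. 1 \<le> j \<and> j \<le> n \<and> j \<noteq> k \<and> j \<noteq> Suc k \<longrightarrow> D n m a j = 0) \<and>
     (k \<noteq> 0 \<longrightarrow> real n * a 0 + real n * L * (\<Sum>i=1..n-1. a i) - real m * L = 0) \<and>
     (k \<noteq> n \<longrightarrow> real n * a 0 + real n * U * (\<Sum>i=1..n-1. a i) - real m * U = 0)"

lemma sum_range:
  fixes n p q :: nat
  assumes "\<And>i. i \<in> {1..n-1} \<Longrightarrow> i \<notin> {p..q} \<Longrightarrow> c i = (0::real)" "{p..q} \<subseteq> {1..n-1}"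
  shows "(\<Sum>i=1..n-1. c i) = (\<Sum>i=p..q. c i)"
  using assms by (intro sum.mono_neutral_right) auto

lemma eqs_k0:
  assumes n: "2 \<le> n" and m: "1 \<le> m" "m < n"
  shows "eqs n m L U 0 (oel_coeffs n m L U 0)"
proof -
  define c where "c = oel_coeffs n m L U 0"
  have c0: "c 0 = U * real m / real n - U * (\<Sum>l=1..m. alpha n m l)" by (simp add: c_def oel_coeffs_def)
  have ca: "\<And>i. 1 \<le> i \<Longrightarrow> i \<le> m \<Longrightarrow> c i = alpha n m i" by (simp add: c_def oel_coeffs_def)
  have cz: "\<And>i. m < i \<Longrightarrow> c i = 0" by (simp add: c_def oel_coeffs_def)
  have Dz: "D n m c j = 0" if j: "1 \<le> j" "j \<le> n" "j \<noteq> 0" "j \<noteq> Suc 0" for j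
  proof -
    consider "j \<le> m" | "j = Suc m" | "Suc m < j" by linarith
    then show ?thesis
    proof cases
      case 1
      then show ?thesis using j alpha_rec[of j m n] ca[of "j - 1"] ca[of j] m by (simp add: D_def)
    next
      case 2
      then show ?thesis using ca[of m] cz[of "Suc m"] m alpha_last[of n m] by (simp add: D_def)
    next
      case 3
      then show ?thesis using cz[of j] cz[of "j - 1"] by (simp add: D_def)
    qed
  qed
  have sm: "(\<Sum>i=1..n-1. c i) = (\<Sum>l=1..m. alpha n m l)"
  proof -
    have "(\<Sum>i=1..n-1. c i) = (\<Sum>i=1..m. c i)"
      using m by (intro sum_range) (auto intro: cz)
    also have "\<dots> = (\<Sum>l=1..m. alpha n m l)" by (rule sum.cong) (auto simp: ca)
    finally show ?thesis .
  qed
  have Vn: "real n * c 0 + real n * U * (\<Sum>i=1..n-1. c i) - real m * U = 0"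
    using n unfolding sm c0 by (simp add: field_simps)
  show ?thesis unfolding eqs_def c_def[symmetric] using Dz Vn by auto
qed

lemma eqs_klow:
  assumes n: "2 \<le> n" and m: "1 \<le> m" "m < n" and k: "1 \<le> k" "k \<le> m"
  shows "eqs n m L U k (oel_coeffs n m L U k)"
proof -
  define c where "c = oel_coeffs n m L U k"
  have c0: "c 0 = 0" using k by (simp add: c_def oel_coeffs_def)
  have ck: "c k = real m / real n - (\<Sum>l=k+1..m. alpha n m l)" using k by (simp add: c_def oel_coeffs_def)
  have ca: "\<And>i. k + 1 \<le> i \<Longrightarrow> i \<le> m \<Longrightarrow> c i = alpha n m i" using k by (simp add: c_def oel_coeffs_def)
  have cz: "\<And>i. m < i \<Longrightarrow> c i = 0" using k by (simp add: c_def oel_coeffs_def)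
  have cl: "\<And>i. i < k \<Longrightarrow> c i = 0" using k by (simp add: c_def oel_coeffs_def)
  have Dz: "D n m c j = 0" if j: "1 \<le> j" "j \<le> n" "j \<noteq> k" "j \<noteq> Suc k" for j
  proof -
    consider "j < k" | "k + 2 \<le> j" "j \<le> m" | "j = Suc m" | "Suc m < j" using j by linarith
    then show ?thesis
    proof cases
      case 1
      then show ?thesis using cl[of j] cl[of "j - 1"] k by (simp add: D_def)
    next
      case 2
      then show ?thesis using j alpha_rec[of j m n] ca[of "j - 1"] ca[of j] m by (simp add: D_def)
    next
      case 3
      then have "k + 1 \<le> m" using j k by arith
      then show ?thesis using 3 ca[of m] cz[of "Suc m"] m alpha_last[of n m] by (simp add: D_def)
    next
      case 4
      then show ?thesis using cz[of j] cz[of "j - 1"] by (simp add: D_def)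
    qed
  qed
  have sm: "(\<Sum>i=1..n-1. c i) = real m / real n"
  proof -
    have "(\<Sum>i=1..n-1. c i) = (\<Sum>i=k..m. c i)"
      using m k by (intro sum_range) (auto intro: cz cl)
    also have "\<dots> = c k + (\<Sum>i=Suc k..m. c i)" using k by (subst sum.atLeast_Suc_atMost) auto
    also have "(\<Sum>i=Suc k..m. c i) = (\<Sum>l=k+1..m. alpha n m l)" by (rule sum.cong) (auto simp: ca)
    finally show ?thesis using ck by simp
  qed
  have V0: "real n * c 0 + real n * L * (\<Sum>i=1..n-1. c i) - real m * L = 0"
    using n unfolding sm c0 by (simp add: field_simps)
  have Vn: "real n * c 0 + real n * U * (\<Sum>i=1..n-1. c i) - real m * U = 0"
    using n unfolding sm c0 by (simp add: field_simps)
  show ?thesis unfolding eqs_def c_def[symmetric] using Dz V0 Vn by auto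
qed

lemma eqs_khigh:
  assumes n: "2 \<le> n" and m: "1 \<le> m" "m < n" and k: "m + 1 \<le> k" "k \<le> n - 1"
  shows "eqs n m L U k (oel_coeffs n m L U k)"
proof -
  define c where "c = oel_coeffs n m L U k"
  have c0: "c 0 = 0" using k by (simp add: c_def oel_coeffs_def)
  have kk: "k \<noteq> 0" "\<not> k \<le> k - 1" "\<not> k \<le> m" "k \<le> n - 1" using k by auto
  have ck: "c k = real m / real n - (\<Sum>l=m+1..k-1. beta n m l)" using kk by (simp add: c_def oel_coeffs_def)
  have cb: "\<And>i. m + 1 \<le> i \<Longrightarrow> i \<le> k - 1 \<Longrightarrow> c i = beta n m i" using k by (simp add: c_def oel_coeffs_def)
  have cz: "\<And>i. k < i \<Longrightarrow> c i = 0" using kk by (simp add: c_def oel_coeffs_def)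
  have cl: "\<And>i. i \<le> m \<Longrightarrow> c i = 0" using k by (simp add: c_def oel_coeffs_def)
  have Dz: "D n m c j = 0" if j: "1 \<le> j" "j \<le> n" "j \<noteq> k" "j \<noteq> Suc k" for j
  proof -
    consider "j \<le> m" | "j = Suc m" "j < k" | "m + 2 \<le> j" "j < k" | "Suc k < j" using j by linarith
    then show ?thesis
    proof cases
      case 1
      then show ?thesis using cl[of j] cl[of "j - 1"] by (simp add: D_def)
    next
      case 2
      then show ?thesis using cl[of m] cb[of "Suc m"] m k beta_first[of m n] by (simp add: D_def)
    next
      case 3
      then show ?thesis using j k beta_rec[of m j n] cb[of "j - 1"] cb[of j] m by (simp add: D_def)
    next
      case 4
      then show ?thesis using cz[of j] cz[of "j - 1"] k by (simp add: D_def)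
    qed
  qed
  have sm: "(\<Sum>i=1..n-1. c i) = real m / real n"
  proof -
    obtain k' where k': "k = Suc k'" using k by (cases k) auto
    have "(\<Sum>i=1..n-1. c i) = (\<Sum>i=m+1..k. c i)"
      using m k by (intro sum_range) (auto intro: cz cl)
    also have "\<dots> = (\<Sum>i=m+1..k-1. c i) + c k" using k k' by (simp add: sum.cl_ivl_Suc)
    also have "(\<Sum>i=m+1..k-1. c i) = (\<Sum>l=m+1..k-1. beta n m l)" by (rule sum.cong) (auto simp: cb)
    finally show ?thesis using ck by simp
  qed
  have V0: "real n * c 0 + real n * L * (\<Sum>i=1..n-1. c i) - real m * L = 0"
    using n unfolding sm c0 by (simp add: field_simps)
  have Vn: "real n * c 0 + real n * U * (\<Sum>i=1..n-1. c i) - real m * U = 0"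
    using n unfolding sm c0 by (simp add: field_simps)
  show ?thesis unfolding eqs_def c_def[symmetric] using Dz V0 Vn by auto
qed

lemma eqs_kn:
  assumes n: "2 \<le> n" and m: "1 \<le> m" "m < n"
  shows "eqs n m L U n (oel_coeffs n m L U n)"
proof -
  define c where "c = oel_coeffs n m L U n"
  have nn: "n \<noteq> 0" "\<not> n \<le> n - 1" "\<not> n \<le> m" using m by auto
  have c0: "c 0 = L * real m / real n - L * (\<Sum>l=m+1..n-1. beta n m l)" using nn by (simp add: c_def oel_coeffs_def)
  have cb: "\<And>i. m + 1 \<le> i \<Longrightarrow> i \<le> n - 1 \<Longrightarrow> c i = beta n m i" using nn by (simp add: c_def oel_coeffs_def)
  have cl: "\<And>i. 1 \<le> i \<Longrightarrow> i \<le> m \<Longrightarrow> c i = 0" using m by (simp add: c_def oel_coeffs_def)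
  have Dz: "D n m c j = 0" if j: "1 \<le> j" "j \<le> n" "j \<noteq> n" "j \<noteq> Suc n" for j
  proof -
    consider "j = 1" | "2 \<le> j" "j \<le> m" | "j = Suc m" | "m + 2 \<le> j" using j by linarith
    then show ?thesis
    proof cases
      case 1
      then show ?thesis using m cl[of 1] by (simp add: D_def)
    next
      case 2
      then show ?thesis using cl[of j] cl[of "j - 1"] by (simp add: D_def)
    next
      case 3
      then show ?thesis using j cl[of m] cb[of "Suc m"] m beta_first[of m n] by (simp add: D_def)
    next
      case 4
      then show ?thesis using j beta_rec[of m j n] cb[of "j - 1"] cb[of j] m by (simp add: D_def)
    qed
  qed
  have sm: "(\<Sum>i=1..n-1. c i) = (\<Sum>l=m+1..n-1. beta n m l)"
  proof -
    have "(\<Sum>i=1..n-1. c i) = (\<Sum>i=m+1..n-1. c i)"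
      using m by (intro sum_range) (auto intro: cl)
    also have "\<dots> = (\<Sum>l=m+1..n-1. beta n m l)" by (rule sum.cong) (auto simp: cb)
    finally show ?thesis .
  qed
  have V0: "real n * c 0 + real n * L * (\<Sum>i=1..n-1. c i) - real m * L = 0"
    using n unfolding sm c0 by (simp add: field_simps)
  show ?thesis unfolding eqs_def c_def[symmetric] using Dz V0 by auto
qed

lemma eqs_oel:
  assumes n: "2 \<le> n" and m: "1 \<le> m" "m < n" and k: "k \<le> n"
  shows "eqs n m L U k (oel_coeffs n m L U k)"
proof -
  consider "k = 0" | "1 \<le> k" "k \<le> m" | "m + 1 \<le> k" "k \<le> n - 1" | "k = n" using k by linarith
  then show ?thesis
  proof cases
    case 1 then show ?thesis using eqs_k0[OF n m] by simp
  next
    case 2 then show ?thesis using eqs_klow[OF n m] by simp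
  next
    case 3 then show ?thesis using eqs_khigh[OF n m] by simp
  next
    case 4 then show ?thesis using eqs_kn[OF n m] by simp
  qed
qed

lemma eqs_from_V:
  assumes m: "m < n" and LU: "L < U" and k: "k \<le> n"
    and Vz: "\<forall>j\<le>n. j \<noteq> k \<longrightarrow> V n m L U a j = 0"
  shows "eqs n m L U k a"
proof -
  have Dz: "D n m a j = 0" if j: "1 \<le> j" "j \<le> n" "j \<noteq> k" "j \<noteq> Suc k" for j
  proof -
    have "j - 1 \<noteq> k" using j by auto
    then have "V n m L U a j - V n m L U a (j - 1) = 0" using Vz j by simp
    moreover have "V n m L U a j - V n m L U a (j - 1) = (U - L) * D n m a j" by (rule V_diff[OF j(1,2) m])
    ultimately have "(U - L) * D n m a j = 0" by simp
    then show ?thesis using LU by simp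
  qed
  have "k \<noteq> 0 \<longrightarrow> real n * a 0 + real n * L * (\<Sum>i=1..n-1. a i) - real m * L = 0"
    using Vz V0[OF m, of L U a] by auto
  moreover have "k \<noteq> n \<longrightarrow> real n * a 0 + real n * U * (\<Sum>i=1..n-1. a i) - real m * U = 0"
    using Vz Vn[OF m, of L U a] by auto
  ultimately show ?thesis unfolding eqs_def using Dz by blast
qed

lemma uniq:
  assumes ea: "eqs n m L U k a" and ec: "eqs n m L U k c" and LU: "L < U" and n: "1 \<le> n" and k: "k \<le> n"
  shows "\<forall>i<n. a i = c i"
proof -
  define b where "b i = a i - c i" for i
  have Hd: "(real j - 1) * b (j - 1) + (real n - real j) * b j = 0"
    if j: "1 \<le> j" "j \<le> n" "j \<noteq> k" "j \<noteq> Suc k" for j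
  proof -
    have "D n m a j = 0" "D n m c j = 0" using ea ec j unfolding eqs_def by blast+
    then show ?thesis by (simp add: D_def b_def algebra_simps)
  qed
  have sb: "(\<Sum>i=1..n-1. b i) = (\<Sum>i=1..n-1. a i) - (\<Sum>i=1..n-1. c i)"
    by (simp add: b_def sum_subtractf)
  have H0: "k \<noteq> 0 \<Longrightarrow> real n * b 0 + real n * L * (\<Sum>i=1..n-1. b i) = 0"
    using ea ec unfolding eqs_def sb by (simp add: b_def algebra_simps)
  have Hn: "k \<noteq> n \<Longrightarrow> real n * b 0 + real n * U * (\<Sum>i=1..n-1. b i) = 0"
    using ea ec unfolding eqs_def sb by (simp add: b_def algebra_simps)
  have fw: "1 \<le> i \<longrightarrow> i < k \<longrightarrow> b i = 0" for i
  proof (induction i)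
    case 0
    then show ?case by simp
  next
    case (Suc i)
    show ?case
    proof (intro impI)
      assume "1 \<le> Suc i" "Suc i < k"
      then have "(real (Suc i) - 1) * b i + (real n - real (Suc i)) * b (Suc i) = 0"
        using Hd[of "Suc i"] k by simp
      moreover have "(real (Suc i) - 1) * b i = 0"
        using Suc.IH \<open>Suc i < k\<close> by (cases "i = 0") auto
      ultimately have "(real n - real (Suc i)) * b (Suc i) = 0" by linarith
      moreover have "real n - real (Suc i) \<noteq> 0" using \<open>Suc i < k\<close> k by simp
      ultimately show "b (Suc i) = 0" by simp
    qed
  qed
  have bw: "k < n - Suc d \<longrightarrow> b (n - Suc d) = 0" for d
  proof (induction d)
    case 0
    show ?case
    proof
      assume kn: "k < n - Suc 0"
      then have "(real n - 1) * b (n - 1) + (real n - real n) * b n = 0"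
        using Hd[of n] n by (simp add: of_nat_diff)
      moreover have "real n - 1 \<noteq> 0" using kn by simp
      ultimately show "b (n - Suc 0) = 0" by simp
    qed
  next
    case (Suc d)
    show ?case
    proof
      assume kd: "k < n - Suc (Suc d)"
      define i where "i = n - Suc (Suc d)"
      have i1: "Suc i = n - Suc d" using kd by (simp add: i_def)
      have "b (Suc i) = 0" using Suc.IH kd i1 by simp
      moreover have "(real (Suc i) - 1) * b i + (real n - real (Suc i)) * b (Suc i) = 0"
      proof -
        have "k < i" "Suc i \<le> n" using kd by (simp_all add: i_def)
        then show ?thesis using Hd[of "Suc i"] by simp
      qed
      moreover have "i \<noteq> 0" using kd by (simp add: i_def)
      ultimately show "b (n - Suc (Suc d)) = 0" by (simp add: i_def)
    qed
  qed
  have bw': "b i = 0" if "k < i" "i < n" for i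
    using bw[of "n - 1 - i"] that by simp
  have others0: "b i = 0" if "1 \<le> i" "i < n" "i \<noteq> k" for i
    using fw[of i] bw'[of i] that by linarith
  have sumk: "(\<Sum>i=1..n-1. b i) = (\<Sum>i=1..n-1. if i = k then b k else 0)"
    by (rule sum.cong) (auto simp: others0)
  have bk0: "b 0 = 0 \<and> (1 \<le> k \<and> k < n \<longrightarrow> b k = 0)"
  proof -
    consider "k = 0" | "k = n" | "1 \<le> k" "k < n" using k by linarith
    then show ?thesis
    proof cases
      case 1
      then have "(\<Sum>i=1..n-1. b i) = 0" using sumk by simp
      then show ?thesis using Hn 1 n by simp
    next
      case 2
      moreover have "\<not> n \<le> n - Suc 0" using n by arith
      ultimately have "(\<Sum>i=1..n-1. b i) = 0" using sumk n by simp
      then show ?thesis using H0 2 n by simp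
    next
      case 3
      moreover have "k \<le> n - Suc 0" using 3 by arith
      ultimately have s: "(\<Sum>i=1..n-1. b i) = b k" using sumk by simp
      have "real n * b 0 + real n * L * b k = 0" "real n * b 0 + real n * U * b k = 0"
        using H0 Hn 3 s by auto
      moreover have "real n * (U - L) * b k = (real n * b 0 + real n * U * b k) - (real n * b 0 + real n * L * b k)"
        by (simp add: algebra_simps)
      ultimately have "real n * (U - L) * b k = 0" by simp
      then have "b k = 0" using n LU by simp
      then show ?thesis using \<open>real n * b 0 + real n * L * b k = 0\<close> n by simp
    qed
  qed
  show ?thesis
  proof (intro allI impI)
    fix i assume i: "i < n"
    have "b i = 0"
    proof (cases "i = 0")
      case True then show ?thesis using bk0 by simp
    next
      case False
      then show ?thesis using bk0 others0[of i] i by (cases "i = k") auto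
    qed
    then show "a i = c i" by (simp add: b_def)
  qed
qed

lemma linear_mech_cong: "(\<forall>i<n. a i = c i) \<Longrightarrow> 1 \<le> n \<Longrightarrow> linear_mech n m f a i \<theta> = linear_mech n m f c i \<theta>"
  unfolding linear_mech_def by (intro arg_cong2[where f="(+)"] sum.cong) auto

theorem theorem2:
  fixes n m :: nat and L U :: real
    and f :: "(nat \<Rightarrow> real) \<Rightarrow> nat set"
    and a :: "nat \<Rightarrow> real"
  assumes "2 \<le> n" and "1 \<le> m" and "m \<le> n - 1" and "L < U"
    and "efficient n m L U f"
    and "feasible n L U (linear_mech n m f a)"
    and "undominated n L U f (linear_mech n m f a)"
  shows "is_OEL n m L U f (linear_mech n m f a)"
proof -
  note n = assms(1) and LU = assms(4) and eff = assms(5) and fe = assms(6) and und = assms(7)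
  have m: "1 \<le> m" "m < n" using assms(1-3) by auto
  have Vall: "\<And>k. V n m L U a k \<le> 0" using V_nonpos[OF eff fe m] LU by simp
  obtain k where k: "k \<le> n" and Vz: "\<forall>j\<le>n. j \<noteq> k \<longrightarrow> V n m L U a j = 0"
  proof (cases "\<exists>p\<le>n. V n m L U a p < 0")
    case True
    then obtain p where p: "p \<le> n" "V n m L U a p < 0" by blast
    have "\<forall>j\<le>n. j \<noteq> p \<longrightarrow> V n m L U a j = 0"
    proof (intro allI impI)
      fix j assume j: "j \<le> n" "j \<noteq> p"
      have "\<not> (V n m L U a j < 0 \<and> V n m L U a p < 0)"
        using two_neg[OF n m LU eff fe und j(1) p(1)] j by simp
      then show "V n m L U a j = 0" using Vall[of j] p by linarith
    qed
    then show ?thesis using that p by blast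
  next
    case False
    then have "\<forall>j\<le>n. j \<noteq> 0 \<longrightarrow> V n m L U a j = 0" using Vall by (meson not_le order_antisym)
    then show ?thesis using that by blast
  qed
  have odd: "odd (int k - int m)" using parity[OF n m LU k Vz Vall] .
  have ea: "eqs n m L U k a" using eqs_from_V[OF m(2) LU k Vz] .
  have ec: "eqs n m L U k (oel_coeffs n m L U k)" using eqs_oel[OF n m k] .
  have eq: "\<forall>i<n. a i = oel_coeffs n m L U k i" using uniq[OF ea ec LU _ k] n by simp
  show ?thesis
    unfolding is_OEL_def
    using k odd linear_mech_cong[OF eq] n by auto
qed

end
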